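(* Let $\Omega\subset\mathbb R^d$ be a $d$-dimensional convex body contained in a ball of radius $R$, let $\mu$ be the uniform probability measure on $\Omega$, and let $\alpha$ be in the $\eta$-interior of $\Omega$ (i.e., the open ball of radius $\eta$ about $\alpha$ lies in $\Omega$). Then the minimizer $y^\star\in\mathbb R^d$ of $F_\alpha(y)=\langle y,\alpha\rangle+\log\int_\Omega e^{-\langle y,x\rangle}d\mu(x)$ satisfies $\|y^\star\|\le\frac{2d}{\eta}\log\frac{4R}{\eta}$.
   Context: The uniform probability measure is normalized Lebesgue measure restricted to $\Omega$; $\langle\cdot,\cdot\rangle$ and $\|\cdot\|$ are Euclidean. *)

theory Defs
  imports "HOL-Probability.Probability"
begin

definition unif :: "'a::euclidean_space set \<Rightarrow> 'a measure" where
  "unif \<Omega> = uniform_measure lborel \<Omega>"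

definition Falpha :: "'a::euclidean_space set \<Rightarrow> 'a \<Rightarrow> 'a \<Rightarrow> real" where
  "Falpha \<Omega> \<alpha> y = y \<bullet> \<alpha> + ln (\<integral>x. exp (- (y \<bullet> x)) \<partial>(unif \<Omega>))"

definition convex_body :: "'a::euclidean_space set \<Rightarrow> bool" where
  "convex_body \<Omega> \<longleftrightarrow> compact \<Omega> \<and> convex \<Omega> \<and> interior \<Omega> \<noteq> {}"

end

theory Submission
  imports Defs
begin

theorem mainTheorem6:
  fixes \<Omega> :: "'a::euclidean_space set" and c \<alpha> y :: 'a and R \<eta> :: real
  assumes "convex_body \<Omega>"
    and "\<Omega> \<subseteq> cball c R"
    and "\<eta> > 0"
    and "ball \<alpha> \<eta> \<subseteq> \<Omega>"
    and "\<forall>z. Falpha \<Omega> \<alpha> y \<le> Falpha \<Omega> \<alpha> z"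
  shows "norm y \<le> (2 * real DIM('a) / \<eta>) * ln (4 * R / \<eta>)"
proof -
  define M where "M = unif \<Omega>"
  define d where "d = DIM('a)"
  define V where "V = unit_ball_vol (real d)"
  define t where "t = norm y"
  have Vpos: "V > 0" unfolding V_def by simp
  have cpt: "compact \<Omega>" using assms(1) unfolding convex_body_def by auto
  have Om[measurable]: "\<Omega> \<in> sets lborel" using cpt by (simp add: compact_imp_closed)
  have "\<alpha> \<in> \<Omega>" using assms(3,4) by auto
  hence "\<alpha> \<in> cball c R" using assms(2) by blast
  hence R0: "R \<ge> 0" using zero_le_dist[of c \<alpha>] by (simp del: zero_le_dist)
  obtain u :: 'a where u: "norm u = 1" "y = t *\<^sub>R u"
  proof (cases "y = 0")
    case True
    obtain b :: 'a where "b \<in> Basis" using nonempty_Basis by blast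
    then show ?thesis using that[of b] True by (auto simp: t_def)
  next
    case False
    then show ?thesis using that[of "sgn y"] by (auto simp: t_def norm_sgn sgn_div_norm)
  qed
  define \<alpha>' where "\<alpha>' = \<alpha> - (3 * \<eta> / 4) *\<^sub>R u"
  define S where "S = ball \<alpha>' (\<eta> / 4)"
  have SB: "S \<subseteq> ball \<alpha> \<eta>"
  proof
    fix x assume "x \<in> S"
    hence "dist \<alpha>' x < \<eta>/4" by (simp add: S_def)
    moreover have "dist \<alpha> \<alpha>' = 3*\<eta>/4" using u(1) assms(3) by (simp add: \<alpha>'_def dist_norm)
    ultimately show "x \<in> ball \<alpha> \<eta>" using dist_triangle[of \<alpha> x \<alpha>'] by simp
  qed
  have SO: "S \<subseteq> \<Omega>" using SB assms(4) by blast
  have mS: "measure lborel S = V * (\<eta>/4)^d"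
    unfolding S_def V_def d_def using assms(3) by (simp add: content_ball)
  have mSe: "emeasure lborel S = ennreal (V * (\<eta>/4)^d)"
    unfolding S_def V_def d_def using assms(3) by (simp add: emeasure_ball)
  have fin: "emeasure lborel \<Omega> < \<infinity>" using cpt by (rule emeasure_compact_finite)
  have pos: "emeasure lborel \<Omega> \<noteq> 0"
  proof
    assume "emeasure lborel \<Omega> = 0"
    hence "emeasure lborel S = 0" using SO by (metis Om emeasure_mono le_zero_eq)
    with mSe Vpos assms(3) show False by simp
  qed
  have P: "prob_space M" unfolding M_def unif_def
    by (rule prob_space_uniform_measure) (use fin pos in auto)
  have sM[simp]: "sets M = sets lborel" by (simp add: M_def unif_def)
  have spM[simp]: "space M = UNIV" by (simp add: M_def unif_def)
  define m where "m = measure lborel \<Omega>"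
  have mle: "m \<le> V * R^d"
  proof -
    have "m \<le> measure lborel (cball c R)" unfolding m_def
      by (rule measure_mono_fmeasurable) (use assms(2) Om emeasure_compact_finite[OF compact_cball[of c R]] in \<open>auto simp: fmeasurable_def\<close>)
    thus ?thesis using R0 by (simp add: content_cball V_def d_def)
  qed
  have mge: "V * (\<eta>/4)^d \<le> m" unfolding m_def mS[symmetric]
    by (rule measure_mono_fmeasurable) (use SO fin Om in \<open>auto simp: S_def fmeasurable_def\<close>)
  have mpos: "m > 0" using mge Vpos assms(3) by (smt (verit) zero_less_divide_iff zero_less_power mult_pos_pos)
  have Rpos: "R > 0"
  proof (rule ccontr)
    assume "\<not> R > 0"
    hence "R = 0" using R0 by simp
    moreover have "d > 0" unfolding d_def by simp
    ultimately have "V * R^d = 0" by simp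
    thus False using mle mpos by linarith
  qed
  have MS: "measure M S = measure lborel S / m"
    unfolding M_def unif_def m_def using fin pos SO
    by (subst measure_uniform_measure) (auto simp: S_def Int_absorb1)
  define f where "f = (\<lambda>x::'a. exp (- (y \<bullet> x)))"
  have fint: "integrable M f"
  proof (rule finite_measure.integrable_const_bound[where B = "exp (norm y * (norm c + R))"])
    show "finite_measure M" using P by (simp add: prob_space_def)
    show "f \<in> borel_measurable M" unfolding f_def by (simp add: measurable_cong_sets[OF sM refl]) 
    show "AE x in M. norm (f x) \<le> exp (norm y * (norm c + R))"
      unfolding M_def unif_def
    proof (rule AE_uniform_measureI[OF Om], intro AE_I2 impI)
      fix x assume "x \<in> \<Omega>"
      hence "norm x \<le> norm c + R" using assms(2) norm_triangle_ineq[of c "x - c"]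
        by (auto simp: dist_norm norm_minus_commute)
      hence "- (y \<bullet> x) \<le> norm y * (norm c + R)"
        using norm_cauchy_schwarz[of "-y" x] mult_left_mono[of "norm x" "norm c + R" "norm y"] by simp
      thus "norm (f x) \<le> exp (norm y * (norm c + R))" by (simp add: f_def)
    qed
  qed
  define K where "K = exp (t * \<eta> / 2 - y \<bullet> \<alpha>)"
  have low: "K * measure M S \<le> integral\<^sup>L M f"
  proof -
    have "integral\<^sup>L M (\<lambda>x. indicator S x * K) \<le> integral\<^sup>L M f"
    proof (rule integral_mono)
      show "integrable M (\<lambda>x. indicator S x * K)"
        using finite_measure.emeasure_finite[of M] P by (auto simp: S_def less_top prob_space_def)
      show "integrable M f" by (rule fint)
      fix x
      show "indicator S x * K \<le> f x"
      proof (cases "x \<in> S")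
        case True
        hence "norm (x - \<alpha>') < \<eta>/4" by (simp add: S_def dist_norm norm_minus_commute)
        hence "u \<bullet> (x - \<alpha>') < \<eta>/4" using norm_cauchy_schwarz[of u "x - \<alpha>'"] u(1) by simp
        moreover have "u \<bullet> (x - \<alpha>) = u \<bullet> (x - \<alpha>') - 3*\<eta>/4"
          using u(1) by (simp add: \<alpha>'_def inner_diff_right inner_add_right algebra_simps dot_square_norm)
        ultimately have "u \<bullet> (x - \<alpha>) \<le> - \<eta>/2" by simp
        hence "t * (u \<bullet> (x - \<alpha>)) \<le> t * (- \<eta>/2)" using mult_left_mono[of "u \<bullet> (x - \<alpha>)" "- \<eta>/2" t] by (simp add: t_def)
        hence "t * \<eta> / 2 - y \<bullet> \<alpha> \<le> - (y \<bullet> x)"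
          using u(2) by (simp add: inner_diff_right algebra_simps)
        thus ?thesis using True by (simp add: K_def f_def)
      qed (simp add: f_def)
    qed
    moreover have "integral\<^sup>L M (\<lambda>x. indicator S x * K) = K * measure M S"
      by simp
    ultimately show ?thesis by (simp add: mult.commute)
  qed
  have MSge: "measure M S \<ge> (\<eta> / (4*R))^d"
  proof -
    have e: "\<eta> / (4*R) = (\<eta>/4) / R" by simp
    have "(\<eta> / (4*R))^d = (\<eta>/4)^d / R^d" unfolding e by (rule power_divide)
    also have "\<dots> = V * (\<eta>/4)^d / (V * R^d)" using Vpos by simp
    also have "\<dots> \<le> V * (\<eta>/4)^d / m"
      using mle mpos Vpos assms(3) by (intro divide_left_mono) auto
    finally show ?thesis using MS mS by simp
  qed
  define I where "I = integral\<^sup>L M f"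
  have Kpos: "K > 0" by (simp add: K_def)
  have qpos: "(\<eta> / (4*R))^d > 0" using assms(3) Rpos by simp
  have Ige: "K * (\<eta> / (4*R))^d \<le> I"
    using low mult_left_mono[OF MSge less_imp_le[OF Kpos]] unfolding I_def by linarith
  have Ipos: "I > 0" using Ige mult_pos_pos[OF Kpos qpos] by linarith
  have F0: "Falpha \<Omega> \<alpha> 0 = 0"
    using prob_space.prob_space[OF P] by (simp add: Falpha_def M_def[symmetric])
  have "Falpha \<Omega> \<alpha> y \<le> 0" using assms(5) F0 by metis
  hence "y \<bullet> \<alpha> + ln I \<le> 0" by (simp add: Falpha_def I_def f_def M_def)
  moreover have "ln (K * (\<eta> / (4*R))^d) \<le> ln I" using Ige mult_pos_pos[OF Kpos qpos] by (subst ln_le_cancel_iff) auto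
  moreover have "ln (K * (\<eta> / (4*R))^d) = ln K + ln ((\<eta> / (4*R))^d)"
    using Kpos qpos by (rule ln_mult_pos)
  moreover have "ln K = t * \<eta> / 2 - y \<bullet> \<alpha>" by (simp add: K_def)
  moreover have "ln ((\<eta> / (4*R))^d) = d * (ln \<eta> - ln (4*R))"
    using assms(3) Rpos by (simp add: ln_realpow ln_div)
  ultimately have "t * \<eta> / 2 \<le> d * (ln (4*R) - ln \<eta>)"
    by (simp only: right_diff_distrib)
  hence "t \<le> (2 * d / \<eta>) * (ln (4*R) - ln \<eta>)" using assms(3)
    by (simp add: field_simps)
  thus ?thesis using assms(3) Rpos by (simp add: t_def d_def ln_div)
qed

end
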